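(* For every session type $S$ and every process $P$: if there exist a trace $t$ and a process $P'$ such that $\langle P ; [\![ S ]\!] \rangle \xRightarrow{t} \langle P' ; \mathsf{no}_P \rangle$, then the typing judgement $\emptyset\cdot\emptyset \vdash P : S$ is not derivable.
   Context: Values $v,u,w$ (including tuples), value variables $x,y,z$, process variables $X,Y$; $a$ ranges over values and value variables. Boolean predicates $A$ include $\mathsf{tt},\mathsf{ff}$, equalities/comparisons of values, conjunction, negation, and for each base type $\mathsf{B}$ a predicate $\mathsf{isValue}_{\mathsf{B}}(v)$ that evaluates to $\mathsf{tt}$ if $v$ is of type $\mathsf{B}$ and to $\mathsf{ff}$ otherwise; $A\Downarrow\mathsf{tt}$ / $A\Downarrow\mathsf{ff}$ denote evaluation. Predicates are type-checked by standard rules ($\Gamma\vdash A:\mathsf{Bool}$). Processes: $P,Q ::= \triangleleft \mathtt{l}(a).P \mid \triangleright\{\mathtt{l}_i(x_i).P_i\}_{i\in I} \mid \mu_X.P \mid X \mid \mathsf{if}\ A\ \mathsf{then}\ P\ \mathsf{else}\ Q \mid \mathbf{0}$, with guarded recursion; $x_i$ is bound in $P_i$, $X$ in $\mu_X.P$. Process transitions: $\mu_X.P \xrightarrow{\tau} P[\mu_X.P/X]$; $\triangleleft\mathtt{l}(v).P \xrightarrow{\triangleleft \mathtt{l}(v)} P$; $\triangleright\{\mathtt{l}_i(x_i).P_i\}_{i\in I} \xrightarrow{\triangleright \mathtt{l}_j(v)} P_j[v/x_j]$ for $j\in I$; $\mathsf{if}\ A\ \mathsf{then}\ P\ \mathsf{else}\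 Q \xrightarrow{\tau} P$ if $A\Downarrow\mathsf{tt}$ and $\xrightarrow{\tau} Q$ if $A\Downarrow\mathsf{ff}$. Base types $\mathsf{B} ::= \mathsf{Int}\mid\mathsf{Str}\mid\mathsf{Bool}\mid\dots\mid(\mathsf{B},\mathsf{B})$. Session types: $S ::= \oplus\{!\mathtt{l}_i(\mathsf{B}_i).S_i\}_{i\in I} \mid \&\{?\mathtt{l}_i(\mathsf{B}_i).S_i\}_{i\in I} \mid \mathsf{rec}\ X.S \mid X \mid \mathsf{end}$, with $I\neq\emptyset$, labels $\mathtt{l}_i$ pairwise distinct, guarded recursion; types are equi-recursive ($\mathsf{rec}\ X.S$ is identified with $S[\mathsf{rec}\ X.S/X]$). Typing uses $\Theta$ (partial map from process variables to session types) and $\Gamma$ (partial map from value variables to base types). $\Gamma\vdash x:\mathsf{B}$ if $\Gamma(x)=\mathsf{B}$; $\Gamma\vdash v:\mathsf{B}$ if $v\in\mathsf{B}$. Process rules: (tBra) if for all $i\in I$, $\Theta\cdot\Gamma,x_i:\mathsf{B}_i\vdash P_i:S_i$, then $\Theta\cdot\Gamma\vdash \triangleright\{\mathtt{l}_i(x_i).P_i\}_{i\in I\cup J} : \&\{?\mathtt{l}_i(\mathsf{B}_i).S_i\}_{i\in I}$; (tSel) if there is $i\in I$ with $\mathtt{l}=\mathtt{l}_i$, $\Gamma\vdash a:\mathsf{B}_i$ and $\Theta\cdot\Gamma\vdash P:S_i$, then $\Theta\cdot\Gamma\vdash \triangleleft\mathtt{l}(a).P : \oplus\{!\mathtt{l}_i(\mathsf{B}_i).S_i\}_{i\in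 I}$; (tRec) $\Theta,X:S\cdot\Gamma\vdash P:S$ implies $\Theta\cdot\Gamma\vdash\mu_X.P:S$; (tPVar) $\Theta(X)=S$ implies $\Theta\cdot\Gamma\vdash X:S$; (tIf) $\Gamma\vdash A:\mathsf{Bool}$, $\Theta\cdot\Gamma\vdash P:S$, $\Theta\cdot\Gamma\vdash Q:S$ imply $\Theta\cdot\Gamma\vdash \mathsf{if}\ A\ \mathsf{then}\ P\ \mathsf{else}\ Q:S$; (tNil) $\Theta\cdot\Gamma\vdash\mathbf{0}:\mathsf{end}$. Monitors: $M,N ::= \triangleleft\mathtt{l}(a).M \mid \triangleright\{\mathtt{l}_i(x_i).M_i\}_{i\in I} \mid \blacktriangle\mathtt{l}(a).M \mid \blacktriangledown\{\mathtt{l}_i(x_i).M_i\}_{i\in I} \mid \mu_X.M \mid X \mid \mathsf{if}\ A\ \mathsf{then}\ M\ \mathsf{else}\ N \mid \mathbf{0} \mid \mathsf{no}_P \mid \mathsf{no}_E$ ($\triangleleft,\triangleright$: send to / receive from the monitored process; $\blacktriangle,\blacktriangledown$: send to / receive from the environment). Monitor transitions: $\triangleleft\mathtt{l}(v).M\xrightarrow{\triangleleft\mathtt{l}(v)}M$; $\blacktriangle\mathtt{l}(v).M\xrightarrow{\blacktriangle\mathtt{l}(v)}M$; $\mu_X.M\xrightarrow{\tau}M[\mu_X.M/X]$; $\triangleright\{\mathtt{l}_i(x_i).M_i\}_{i\in I}\xrightarrow{\triangleright\mathtt{l}_j(v)}M_j[v/x_j]$ and $\blacktriangledown\{\mathtt{l}_i(x_i).M_i\}_{i\in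 I}\xrightarrow{\blacktriangledown\mathtt{l}_j(v)}M_j[v/x_j]$ for $j\in I$; conditionals as for processes; violations: $\triangleright\{\mathtt{l}_i(x_i).M_i\}_{i\in I}\xrightarrow{\triangleright\mathtt{l}(v)}\mathsf{no}_P$ and $\blacktriangledown\{\mathtt{l}_i(x_i).M_i\}_{i\in I}\xrightarrow{\blacktriangledown\mathtt{l}(v)}\mathsf{no}_E$ whenever $\mathtt{l}\neq\mathtt{l}_i$ for all $i\in I$. Composite system $\langle P;M\rangle$: if $P\xrightarrow{\triangleleft\mathtt{l}(v)}P'$ and $M\xrightarrow{\triangleright\mathtt{l}(v)}M'$ then $\langle P;M\rangle\xrightarrow{\tau}\langle P';M'\rangle$; if $P\xrightarrow{\triangleright\mathtt{l}(v)}P'$ and $M\xrightarrow{\triangleleft\mathtt{l}(v)}M'$ then $\langle P;M\rangle\xrightarrow{\tau}\langle P';M'\rangle$; if $M\xrightarrow{\alpha}M'$ with $\alpha\in\{\blacktriangle\mathtt{l}(v),\blacktriangledown\mathtt{l}(v)\}$ then $\langle P;M\rangle\xrightarrow{\alpha}\langle P;M'\rangle$; if $P\xrightarrow{\tau}P'$ then $\langle P;M\rangle\xrightarrow{\tau}\langle P';M\rangle$; if $M\xrightarrow{\tau}M'$ then $\langle P;M\rangle\xrightarrow{\tau}\langle P;M'\rangle$. A trace $t$ is a finite sequence of actions $\blacktriangle\mathtt{l}(v)$, $\blacktriangledown\mathtt{l}(v)$; $\xRightarrow{t}$ is a sequence of transitions whose visible labels are $t$, interleaved with finitely many $\tau$-transitions.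 Monitor synthesis $[\![-]\!]$: $[\![\oplus\{!\mathtt{l}_i(\mathsf{B}_i).S_i\}_{i\in I}]\!] = \triangleright\{\mathtt{l}_i(x_i).\,\mathsf{if}\ \mathsf{isValue}_{\mathsf{B}_i}(x_i)\ \mathsf{then}\ \blacktriangle\mathtt{l}_i(x_i).[\![S_i]\!]\ \mathsf{else}\ \mathsf{no}_P\}_{i\in I}$; $[\![\&\{?\mathtt{l}_i(\mathsf{B}_i).S_i\}_{i\in I}]\!] = \blacktriangledown\{\mathtt{l}_i(x_i).\,\mathsf{if}\ \mathsf{isValue}_{\mathsf{B}_i}(x_i)\ \mathsf{then}\ \triangleleft\mathtt{l}_i(x_i).[\![S_i]\!]\ \mathsf{else}\ \mathsf{no}_E\}_{i\in I}$; $[\![\mathsf{rec}\ X.S]\!]=\mu_X.[\![S]\!]$; $[\![X]\!]=X$; $[\![\mathsf{end}]\!]=\mathbf{0}$. *)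

theory Defs
  imports Main
begin

type_synonym label = string
type_synonym vvar = string
type_synonym pvar = string

datatype val = VInt int | VStr string | VBool bool | VPair val val

datatype btype = TInt | TStr | TBool | TPair btype btype

fun has_type :: "val \<Rightarrow> btype \<Rightarrow> bool" where
  "has_type (VInt _) TInt = True"
| "has_type (VStr _) TStr = True"
| "has_type (VBool _) TBool = True"
| "has_type (VPair v w) (TPair B C) = (has_type v B \<and> has_type w C)"
| "has_type _ _ = False"

datatype arg = AVal val | AVar vvar

datatype pred = PTT | PFF | PEq arg arg | PLess arg arg | PAnd pred pred | PNot pred
  | PIsVal btype arg

fun eval_arg :: "arg \<Rightarrow> val option" where
  "eval_arg (AVal v) = Some v"
| "eval_arg (AVar _) = None"

fun eval :: "pred \<Rightarrow> bool option" where
  "eval PTT = Some True"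
| "eval PFF = Some False"
| "eval (PEq a b) = (case (eval_arg a, eval_arg b) of
      (Some v, Some w) \<Rightarrow> Some (v = w) | _ \<Rightarrow> None)"
| "eval (PLess a b) = (case (eval_arg a, eval_arg b) of
      (Some (VInt i), Some (VInt j)) \<Rightarrow> Some (i < j) | _ \<Rightarrow> None)"
| "eval (PAnd A B) = (case (eval A, eval B) of
      (Some p, Some q) \<Rightarrow> Some (p \<and> q) | _ \<Rightarrow> None)"
| "eval (PNot A) = map_option Not (eval A)"
| "eval (PIsVal B a) = map_option (\<lambda>v. has_type v B) (eval_arg a)"

fun subst_arg :: "arg \<Rightarrow> vvar \<Rightarrow> val \<Rightarrow> arg" where
  "subst_arg (AVar y) x v = (if y = x then AVal v else AVar y)"
| "subst_arg (AVal w) x v = AVal w"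

fun subst_pred :: "pred \<Rightarrow> vvar \<Rightarrow> val \<Rightarrow> pred" where
  "subst_pred PTT x v = PTT"
| "subst_pred PFF x v = PFF"
| "subst_pred (PEq a b) x v = PEq (subst_arg a x v) (subst_arg b x v)"
| "subst_pred (PLess a b) x v = PLess (subst_arg a x v) (subst_arg b x v)"
| "subst_pred (PAnd A B) x v = PAnd (subst_pred A x v) (subst_pred B x v)"
| "subst_pred (PNot A) x v = PNot (subst_pred A x v)"
| "subst_pred (PIsVal B a) x v = PIsVal B (subst_arg a x v)"

text \<open>A branching \<open>\<triangleright>{l_i(x_i).P_i}_{i\<in>I}\<close> is a list of triples (l_i, x_i, P_i),
  read as the finite partial map map_of (first occurrence of a label wins).\<close>
datatype proc =
    PSend label arg proc
  | PBra "(label \<times> vvar \<times> proc) list"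
  | PRec pvar proc
  | PVar pvar
  | PIf pred proc proc
  | PNil

fun psubstv :: "proc \<Rightarrow> vvar \<Rightarrow> val \<Rightarrow> proc" where
  "psubstv (PSend l a P) x v = PSend l (subst_arg a x v) (psubstv P x v)"
| "psubstv (PBra bs) x v =
     PBra (map (\<lambda>(l, y, Q). (l, y, if y = x then Q else psubstv Q x v)) bs)"
| "psubstv (PRec X P) x v = PRec X (psubstv P x v)"
| "psubstv (PVar X) x v = PVar X"
| "psubstv (PIf A P Q) x v = PIf (subst_pred A x v) (psubstv P x v) (psubstv Q x v)"
| "psubstv PNil x v = PNil"

fun psubstX :: "proc \<Rightarrow> pvar \<Rightarrow> proc \<Rightarrow> proc" where
  "psubstX (PSend l a P) X R = PSend l a (psubstX P X R)"
| "psubstX (PBra bs) X R = PBra (map (\<lambda>(l, y, Q). (l, y, psubstX Q X R)) bs)"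
| "psubstX (PRec Y P) X R = (if Y = X then PRec Y P else PRec Y (psubstX P X R))"
| "psubstX (PVar Y) X R = (if Y = X then R else PVar Y)"
| "psubstX (PIf A P Q) X R = PIf A (psubstX P X R) (psubstX Q X R)"
| "psubstX PNil X R = PNil"

datatype act =
    ASndP label val
  | ARcvP label val
  | ASndE label val
  | ARcvE label val
  | ATau

inductive pstep :: "proc \<Rightarrow> act \<Rightarrow> proc \<Rightarrow> bool" where
  p_rec: "pstep (PRec X P) ATau (psubstX P X (PRec X P))"
| p_send: "pstep (PSend l (AVal v) P) (ASndP l v) P"
| p_bra: "map_of bs l = Some (x, P) \<Longrightarrow> pstep (PBra bs) (ARcvP l v) (psubstv P x v)"
| p_ift: "eval A = Some True \<Longrightarrow> pstep (PIf A P Q) ATau P"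
| p_iff: "eval A = Some False \<Longrightarrow> pstep (PIf A P Q) ATau Q"

datatype stype =
    SSel "(label \<times> btype \<times> stype) list"
  | SBra "(label \<times> btype \<times> stype) list"
  | SRec pvar stype
  | STVar pvar
  | SEnd

fun ssubst :: "stype \<Rightarrow> pvar \<Rightarrow> stype \<Rightarrow> stype" where
  "ssubst (SSel bs) X R = SSel (map (\<lambda>(l, B, S). (l, B, ssubst S X R)) bs)"
| "ssubst (SBra bs) X R = SBra (map (\<lambda>(l, B, S). (l, B, ssubst S X R)) bs)"
| "ssubst (SRec Y S) X R = (if Y = X then SRec Y S else SRec Y (ssubst S X R))"
| "ssubst (STVar Y) X R = (if Y = X then R else STVar Y)"
| "ssubst SEnd X R = SEnd"

primrec unguarded :: "stype \<Rightarrow> pvar set" where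
  "unguarded (SSel bs) = {}"
| "unguarded (SBra bs) = {}"
| "unguarded (SRec Y S) = unguarded S - {Y}"
| "unguarded (STVar Y) = {Y}"
| "unguarded SEnd = {}"

fun wf_stype :: "stype \<Rightarrow> bool" where
  "wf_stype (SSel bs) = (bs \<noteq> [] \<and> distinct (map fst bs) \<and> (\<forall>(l, B, S) \<in> set bs. wf_stype S))"
| "wf_stype (SBra bs) = (bs \<noteq> [] \<and> distinct (map fst bs) \<and> (\<forall>(l, B, S) \<in> set bs. wf_stype S))"
| "wf_stype (SRec X S) = (X \<notin> unguarded S \<and> wf_stype S)"
| "wf_stype (STVar X) = True"
| "wf_stype SEnd = True"

text \<open>Equi-recursive type equality: head unfolding of top-level recursions,
  and the coinductive equality of the resulting (infinite) unfoldings.\<close>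
inductive hnf :: "stype \<Rightarrow> stype \<Rightarrow> bool" where
  hnf_sel: "hnf (SSel bs) (SSel bs)"
| hnf_bra: "hnf (SBra bs) (SBra bs)"
| hnf_end: "hnf SEnd SEnd"
| hnf_rec: "hnf (ssubst S X (SRec X S)) T \<Longrightarrow> hnf (SRec X S) T"

coinductive teq :: "stype \<Rightarrow> stype \<Rightarrow> bool" where
  teq_end: "hnf S SEnd \<Longrightarrow> hnf T SEnd \<Longrightarrow> teq S T"
| teq_sel: "hnf S (SSel bs) \<Longrightarrow> hnf T (SSel cs) \<Longrightarrow>
    (\<forall>(l, B, S') \<in> set bs. \<exists>T'. (l, B, T') \<in> set cs \<and> teq S' T') \<Longrightarrow>
    (\<forall>(l, B, T') \<in> set cs. \<exists>S'. (l, B, S') \<in> set bs \<and> teq S' T') \<Longrightarrow> teq S T"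
| teq_bra: "hnf S (SBra bs) \<Longrightarrow> hnf T (SBra cs) \<Longrightarrow>
    (\<forall>(l, B, S') \<in> set bs. \<exists>T'. (l, B, T') \<in> set cs \<and> teq S' T') \<Longrightarrow>
    (\<forall>(l, B, T') \<in> set cs. \<exists>S'. (l, B, S') \<in> set bs \<and> teq S' T') \<Longrightarrow> teq S T"

fun arg_type :: "(vvar \<rightharpoonup> btype) \<Rightarrow> arg \<Rightarrow> btype \<Rightarrow> bool" where
  "arg_type \<Gamma> (AVal v) B = has_type v B"
| "arg_type \<Gamma> (AVar x) B = (\<Gamma> x = Some B)"

fun pred_ok :: "(vvar \<rightharpoonup> btype) \<Rightarrow> pred \<Rightarrow> bool" where
  "pred_ok \<Gamma> PTT = True"
| "pred_ok \<Gamma> PFF = True"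
| "pred_ok \<Gamma> (PEq a b) = (\<exists>B. arg_type \<Gamma> a B \<and> arg_type \<Gamma> b B)"
| "pred_ok \<Gamma> (PLess a b) = (arg_type \<Gamma> a TInt \<and> arg_type \<Gamma> b TInt)"
| "pred_ok \<Gamma> (PAnd A B) = (pred_ok \<Gamma> A \<and> pred_ok \<Gamma> B)"
| "pred_ok \<Gamma> (PNot A) = pred_ok \<Gamma> A"
| "pred_ok \<Gamma> (PIsVal B a) = (\<exists>C. arg_type \<Gamma> a C)"

inductive typed :: "(pvar \<rightharpoonup> stype) \<Rightarrow> (vvar \<rightharpoonup> btype) \<Rightarrow> proc \<Rightarrow> stype \<Rightarrow> bool" where
  tBra: "(\<forall>(l, B, S) \<in> set tbs. \<exists>x Q. map_of bs l = Some (x, Q) \<and> typed \<Theta> (\<Gamma>(x \<mapsto> B)) Q S)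
         \<Longrightarrow> typed \<Theta> \<Gamma> (PBra bs) (SBra tbs)"
| tSel: "(l, B, S) \<in> set tbs \<Longrightarrow> arg_type \<Gamma> a B \<Longrightarrow> typed \<Theta> \<Gamma> P S
         \<Longrightarrow> typed \<Theta> \<Gamma> (PSend l a P) (SSel tbs)"
| tRec: "typed (\<Theta>(X \<mapsto> S)) \<Gamma> P S \<Longrightarrow> typed \<Theta> \<Gamma> (PRec X P) S"
| tPVar: "\<Theta> X = Some S \<Longrightarrow> typed \<Theta> \<Gamma> (PVar X) S"
| tIf: "pred_ok \<Gamma> A \<Longrightarrow> typed \<Theta> \<Gamma> P S \<Longrightarrow> typed \<Theta> \<Gamma> Q S \<Longrightarrow> typed \<Theta> \<Gamma> (PIf A P Q) S"
| tNil: "typed \<Theta> \<Gamma> PNil SEnd"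
| tEq: "typed \<Theta> \<Gamma> P S \<Longrightarrow> teq S S' \<Longrightarrow> typed \<Theta> \<Gamma> P S'"

datatype mon =
    MSendP label arg mon
  | MBraP "(label \<times> vvar \<times> mon) list"
  | MSendE label arg mon
  | MBraE "(label \<times> vvar \<times> mon) list"
  | MRec pvar mon
  | MVar pvar
  | MIf pred mon mon
  | MNil
  | NoP
  | NoE

fun msubstv :: "mon \<Rightarrow> vvar \<Rightarrow> val \<Rightarrow> mon" where
  "msubstv (MSendP l a M) x v = MSendP l (subst_arg a x v) (msubstv M x v)"
| "msubstv (MBraP bs) x v =
     MBraP (map (\<lambda>(l, y, N). (l, y, if y = x then N else msubstv N x v)) bs)"
| "msubstv (MSendE l a M) x v = MSendE l (subst_arg a x v) (msubstv M x v)"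
| "msubstv (MBraE bs) x v =
     MBraE (map (\<lambda>(l, y, N). (l, y, if y = x then N else msubstv N x v)) bs)"
| "msubstv (MRec X M) x v = MRec X (msubstv M x v)"
| "msubstv (MVar X) x v = MVar X"
| "msubstv (MIf A M N) x v = MIf (subst_pred A x v) (msubstv M x v) (msubstv N x v)"
| "msubstv MNil x v = MNil"
| "msubstv NoP x v = NoP"
| "msubstv NoE x v = NoE"

fun msubstX :: "mon \<Rightarrow> pvar \<Rightarrow> mon \<Rightarrow> mon" where
  "msubstX (MSendP l a M) X R = MSendP l a (msubstX M X R)"
| "msubstX (MBraP bs) X R = MBraP (map (\<lambda>(l, y, N). (l, y, msubstX N X R)) bs)"
| "msubstX (MSendE l a M) X R = MSendE l a (msubstX M X R)"
| "msubstX (MBraE bs) X R = MBraE (map (\<lambda>(l, y, N). (l, y, msubstX N X R)) bs)"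
| "msubstX (MRec Y M) X R = (if Y = X then MRec Y M else MRec Y (msubstX M X R))"
| "msubstX (MVar Y) X R = (if Y = X then R else MVar Y)"
| "msubstX (MIf A M N) X R = MIf A (msubstX M X R) (msubstX N X R)"
| "msubstX MNil X R = MNil"
| "msubstX NoP X R = NoP"
| "msubstX NoE X R = NoE"

inductive mstep :: "mon \<Rightarrow> act \<Rightarrow> mon \<Rightarrow> bool" where
  m_sendP: "mstep (MSendP l (AVal v) M) (ASndP l v) M"
| m_sendE: "mstep (MSendE l (AVal v) M) (ASndE l v) M"
| m_rec: "mstep (MRec X M) ATau (msubstX M X (MRec X M))"
| m_braP: "map_of bs l = Some (x, M) \<Longrightarrow> mstep (MBraP bs) (ARcvP l v) (msubstv M x v)"
| m_braE: "map_of bs l = Some (x, M) \<Longrightarrow> mstep (MBraE bs) (ARcvE l v) (msubstv M x v)"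
| m_ift: "eval A = Some True \<Longrightarrow> mstep (MIf A M N) ATau M"
| m_iff: "eval A = Some False \<Longrightarrow> mstep (MIf A M N) ATau N"
| m_noP: "map_of bs l = None \<Longrightarrow> mstep (MBraP bs) (ARcvP l v) NoP"
| m_noE: "map_of bs l = None \<Longrightarrow> mstep (MBraE bs) (ARcvE l v) NoE"

inductive sstep :: "proc \<Rightarrow> mon \<Rightarrow> act \<Rightarrow> proc \<Rightarrow> mon \<Rightarrow> bool" where
  s_out: "pstep P (ASndP l v) P' \<Longrightarrow> mstep M (ARcvP l v) M' \<Longrightarrow> sstep P M ATau P' M'"
| s_in: "pstep P (ARcvP l v) P' \<Longrightarrow> mstep M (ASndP l v) M' \<Longrightarrow> sstep P M ATau P' M'"
| s_envS: "mstep M (ASndE l v) M' \<Longrightarrow> sstep P M (ASndE l v) P M'"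
| s_envR: "mstep M (ARcvE l v) M' \<Longrightarrow> sstep P M (ARcvE l v) P M'"
| s_tauP: "pstep P ATau P' \<Longrightarrow> sstep P M ATau P' M"
| s_tauM: "mstep M ATau M' \<Longrightarrow> sstep P M ATau P M'"

inductive wsteps :: "proc \<Rightarrow> mon \<Rightarrow> act list \<Rightarrow> proc \<Rightarrow> mon \<Rightarrow> bool" where
  w_refl: "wsteps P M [] P M"
| w_tau: "sstep P M ATau P1 M1 \<Longrightarrow> wsteps P1 M1 t P' M' \<Longrightarrow> wsteps P M t P' M'"
| w_vis: "sstep P M \<alpha> P1 M1 \<Longrightarrow> \<alpha> \<noteq> ATau \<Longrightarrow> wsteps P1 M1 t P' M' \<Longrightarrow> wsteps P M (\<alpha> # t) P' M'"

fun synth :: "stype \<Rightarrow> mon" where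
  "synth (SSel bs) = MBraP (map (\<lambda>(l, B, S). (l, ''x'',
      MIf (PIsVal B (AVar ''x'')) (MSendE l (AVar ''x'') (synth S)) NoP)) bs)"
| "synth (SBra bs) = MBraE (map (\<lambda>(l, B, S). (l, ''x'',
      MIf (PIsVal B (AVar ''x'')) (MSendP l (AVar ''x'') (synth S)) NoE)) bs)"
| "synth (SRec X S) = MRec X (synth S)"
| "synth (STVar X) = MVar X"
| "synth SEnd = MNil"

end

theory Submission
  imports Defs
begin

fun dl :: "stype \<Rightarrow> bool" where
  "dl (SSel bs) = (distinct (map fst bs) \<and> (\<forall>(l, B, S) \<in> set bs. dl S))"
| "dl (SBra bs) = (distinct (map fst bs) \<and> (\<forall>(l, B, S) \<in> set bs. dl S))"
| "dl (SRec X S) = dl S"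
| "dl (STVar X) = True"
| "dl SEnd = True"

lemma map_fst3: "map fst (map (\<lambda>(l, B, S). (l, B, g S)) bs) = map fst bs"
  by (induct bs) auto

lemma fst_comp3[simp]: "fst \<circ> (\<lambda>(l, B, S). (l, B, g S)) = fst"
  by auto

lemma dl_ssubst: "dl S \<Longrightarrow> dl R \<Longrightarrow> dl (ssubst S X R)"
  by (induction S X R rule: ssubst.induct) auto

lemma wf_dl: "wf_stype S \<Longrightarrow> dl S"
  by (induction S rule: wf_stype.induct) auto

inductive_cases hnf_SSelE: "hnf (SSel bs) T"
inductive_cases hnf_SBraE: "hnf (SBra bs) T"
inductive_cases hnf_SEndE: "hnf SEnd T"
inductive_cases hnf_SRecE: "hnf (SRec X S) T"
inductive_cases hnf_STVarE: "hnf (STVar X) T"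

lemma hnf_det: "hnf S A \<Longrightarrow> hnf S B \<Longrightarrow> A = B"
proof (induction arbitrary: B rule: hnf.induct)
  case (hnf_rec S X T)
  from hnf_rec.prems show ?case by (rule hnf_SRecE) (rule hnf_rec.IH)
qed (auto elim: hnf_SSelE hnf_SBraE hnf_SEndE)

lemma synth_ssubst: "msubstX (synth S) X (synth R) = synth (ssubst S X R)"
  by (induction S rule: synth.induct) auto

lemma msubstv_synth: "msubstv (synth S) ''x'' v = synth S"
  by (induction S rule: synth.induct) auto

lemma map_of_map3: "map_of (map (\<lambda>(l, y, Q). (l, y, f y Q)) bs) l = map_option (\<lambda>(y, Q). (y, f y Q)) (map_of bs l)"
  by (induct bs) auto

lemma map_of_map2: "map_of (map (\<lambda>(l, B, S). (l, g B S)) bs) l = map_option (\<lambda>(B, S). g B S) (map_of bs l)"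
  by (induct bs) auto

lemma arg_type_mono: "arg_type \<Gamma> a B \<Longrightarrow> \<Gamma> \<subseteq>\<^sub>m \<Gamma>' \<Longrightarrow> arg_type \<Gamma>' a B"
  by (cases a) (simp, metis domI map_le_def arg_type.simps(2))

lemma pred_ok_mono: "pred_ok \<Gamma> A \<Longrightarrow> \<Gamma> \<subseteq>\<^sub>m \<Gamma>' \<Longrightarrow> pred_ok \<Gamma>' A"
  by (induction A) (auto intro: arg_type_mono)

lemma typed_weaken: "typed \<Theta> \<Gamma> P T \<Longrightarrow> \<Theta> \<subseteq>\<^sub>m \<Theta>' \<Longrightarrow> \<Gamma> \<subseteq>\<^sub>m \<Gamma>' \<Longrightarrow> typed \<Theta>' \<Gamma>' P T"
proof (induction arbitrary: \<Theta>' \<Gamma>' rule: typed.induct)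
  case (tBra tbs bs \<Theta> \<Gamma>)
  show ?case
  proof (rule typed.tBra, clarify)
    fix l B S assume "(l, B, S) \<in> set tbs"
    with tBra.IH obtain x Q where "map_of bs l = Some (x, Q)"
      "\<And>\<Theta>' \<Gamma>'. \<Theta> \<subseteq>\<^sub>m \<Theta>' \<Longrightarrow> \<Gamma>(x \<mapsto> B) \<subseteq>\<^sub>m \<Gamma>' \<Longrightarrow> typed \<Theta>' \<Gamma>' Q S" by fastforce
    moreover have "\<Gamma>(x \<mapsto> B) \<subseteq>\<^sub>m \<Gamma>'(x \<mapsto> B)" using tBra.prems(2) by (auto simp: map_le_def)
    ultimately show "\<exists>x Q. map_of bs l = Some (x, Q) \<and> typed \<Theta>' (\<Gamma>'(x \<mapsto> B)) Q S"
      using tBra.prems(1) by blast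
  qed
next
  case (tSel l B S tbs \<Gamma> a \<Theta> P)
  then show ?case by (auto intro: typed.tSel arg_type_mono)
next
  case (tRec \<Theta> X S \<Gamma> P)
  have "\<Theta>(X \<mapsto> S) \<subseteq>\<^sub>m \<Theta>'(X \<mapsto> S)" using tRec.prems(1) by (auto simp: map_le_def)
  then show ?case using tRec.IH tRec.prems(2) by (intro typed.tRec) blast
next
  case (tPVar \<Theta> X S \<Gamma>)
  then have "\<Theta>' X = Some S" by (metis domI map_le_def)
  then show ?case by (rule typed.tPVar)
next
  case (tIf \<Gamma> A \<Theta> P S Q)
  then show ?case by (auto intro: typed.tIf pred_ok_mono)
next
  case (tNil \<Theta> \<Gamma>)
  then show ?case by (auto intro: typed.tNil)
next
  case (tEq \<Theta> \<Gamma> P S S')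
  then show ?case by (auto intro: typed.tEq)
qed


lemma typed_psubstX:
  "typed \<Theta> \<Gamma> P T \<Longrightarrow> \<Theta> X = Some S \<Longrightarrow> typed Map.empty Map.empty R S
   \<Longrightarrow> (\<forall>Y. Y \<noteq> X \<longrightarrow> \<Theta>' Y = \<Theta> Y) \<Longrightarrow> typed \<Theta>' \<Gamma> (psubstX P X R) T"
proof (induction arbitrary: \<Theta>' rule: typed.induct)
  case (tBra tbs bs \<Theta> \<Gamma>)
  show ?case unfolding psubstX.simps
  proof (rule typed.tBra, clarify)
    fix l B S' assume "(l, B, S') \<in> set tbs"
    with tBra.IH obtain x Q where "map_of bs l = Some (x, Q)"
      "typed \<Theta>' (\<Gamma>(x \<mapsto> B)) (psubstX Q X R) S'" using tBra.prems by fastforce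
    then show "\<exists>x Q. map_of (map (\<lambda>(l, y, Q). (l, y, psubstX Q X R)) bs) l = Some (x, Q) \<and> typed \<Theta>' (\<Gamma>(x \<mapsto> B)) Q S'"
      by (simp add: map_of_map3[where f="\<lambda>y Q. psubstX Q X R"])
  qed
next
  case (tSel l B S tbs \<Gamma> a \<Theta> P)
  then show ?case by (auto intro: typed.tSel)
next
  case (tRec \<Theta> Y T \<Gamma> P)
  show ?case
  proof (cases "Y = X")
    case True
    have "\<Theta>'(Y \<mapsto> T) = \<Theta>(Y \<mapsto> T)" using tRec.prems(3) True by (auto simp: fun_eq_iff)
    then show ?thesis using True tRec.hyps by (auto intro: typed.tRec)
  next
    case False
    have "typed (\<Theta>'(Y \<mapsto> T)) \<Gamma> (psubstX P X R) T"
      by (rule tRec.IH) (use tRec.prems False in auto)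
    then show ?thesis using False by (auto intro: typed.tRec)
  qed
next
  case (tPVar \<Theta> Y T \<Gamma>)
  show ?case
  proof (cases "Y = X")
    case True
    then have "T = S" using tPVar by simp
    then show ?thesis using True tPVar.prems(2) typed_weaken[of Map.empty Map.empty R S \<Theta>' \<Gamma>] by auto
  next
    case False
    then show ?thesis using tPVar by (auto intro: typed.tPVar)
  qed
next
  case (tIf \<Gamma> A \<Theta> P S Q)
  then show ?case by (auto intro: typed.tIf)
next
  case (tNil \<Theta> \<Gamma>)
  then show ?case by (auto intro: typed.tNil)
next
  case (tEq \<Theta> \<Gamma> P S S')
  then show ?case by (auto intro: typed.tEq)
qed

lemma arg_type_subst:
  "arg_type \<Gamma> a C \<Longrightarrow> \<Gamma> x = Some B \<Longrightarrow> has_type v B \<Longrightarrow> (\<forall>y. y \<noteq> x \<longrightarrow> \<Gamma>' y = \<Gamma> y)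
   \<Longrightarrow> arg_type \<Gamma>' (subst_arg a x v) C"
  by (cases a) auto

lemma pred_ok_subst:
  "pred_ok \<Gamma> A \<Longrightarrow> \<Gamma> x = Some B \<Longrightarrow> has_type v B \<Longrightarrow> (\<forall>y. y \<noteq> x \<longrightarrow> \<Gamma>' y = \<Gamma> y)
   \<Longrightarrow> pred_ok \<Gamma>' (subst_pred A x v)"
  by (induction A) (auto dest: arg_type_subst)

lemma typed_psubstv:
  "typed \<Theta> \<Gamma> P T \<Longrightarrow> \<Gamma> x = Some B \<Longrightarrow> has_type v B
   \<Longrightarrow> (\<forall>y. y \<noteq> x \<longrightarrow> \<Gamma>' y = \<Gamma> y) \<Longrightarrow> typed \<Theta> \<Gamma>' (psubstv P x v) T"
proof (induction arbitrary: \<Gamma>' rule: typed.induct)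
  case (tBra tbs bs \<Theta> \<Gamma>)
  show ?case unfolding psubstv.simps
  proof (rule typed.tBra, clarify)
    fix l B' S' assume "(l, B', S') \<in> set tbs"
    with tBra.IH obtain y Q where m: "map_of bs l = Some (y, Q)"
      and t: "typed \<Theta> (\<Gamma>(y \<mapsto> B')) Q S'"
      and ih: "\<And>\<Gamma>''. (\<Gamma>(y \<mapsto> B')) x = Some B \<Longrightarrow> (\<forall>z. z \<noteq> x \<longrightarrow> \<Gamma>'' z = (\<Gamma>(y \<mapsto> B')) z)
          \<Longrightarrow> typed \<Theta> \<Gamma>'' (psubstv Q x v) S'"
      using tBra.prems by fastforce
    have "typed \<Theta> (\<Gamma>'(y \<mapsto> B')) (if y = x then Q else psubstv Q x v) S'"
    proof (cases "y = x")
      case True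
      have "\<Gamma>'(y \<mapsto> B') = \<Gamma>(y \<mapsto> B')" using True tBra.prems(3) by (auto simp: fun_eq_iff)
      then show ?thesis using True t by simp
    next
      case False
      show ?thesis using False tBra.prems by (simp, intro ih) auto
    qed
    then show "\<exists>ya Q. map_of (map (\<lambda>(l, y, Q). (l, y, if y = x then Q else psubstv Q x v)) bs) l = Some (ya, Q) \<and> typed \<Theta> (\<Gamma>'(ya \<mapsto> B')) Q S'"
      using m by (simp add: map_of_map3[where f="\<lambda>y Q. if y = x then Q else psubstv Q x v"])
  qed
next
  case (tSel l B S tbs \<Gamma> a \<Theta> P)
  then show ?case by (auto intro: typed.tSel arg_type_subst)
next
  case (tRec \<Theta> Y T \<Gamma> P)
  then have "typed (\<Theta>(Y \<mapsto> T)) \<Gamma>' (psubstv P x v) T" by blast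
  then show ?case by (auto intro: typed.tRec)
next
  case (tPVar \<Theta> Y T \<Gamma>)
  then show ?case by (auto intro: typed.tPVar)
next
  case (tIf \<Gamma> A \<Theta> P S Q)
  then show ?case by (auto intro: typed.tIf pred_ok_subst)
next
  case (tNil \<Theta> \<Gamma>)
  then show ?case by (auto intro: typed.tNil)
next
  case (tEq \<Theta> \<Gamma> P S S')
  then show ?case by (auto intro: typed.tEq)
qed


lemma inv_send:
  "typed \<Theta> \<Gamma> P T \<Longrightarrow> P = PSend l a P' \<Longrightarrow>
   \<exists>cs B S. hnf T (SSel cs) \<and> (l, B, S) \<in> set cs \<and> arg_type \<Gamma> a B \<and> typed \<Theta> \<Gamma> P' S"
proof (induction rule: typed.induct)
  case (tSel l B S tbs \<Gamma> a \<Theta> P)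
  then show ?case by (auto intro: hnf.intros)
next
  case (tEq \<Theta> \<Gamma> P S S')
  then obtain cs B S0 where h: "hnf S (SSel cs)" and m: "(l, B, S0) \<in> set cs"
    and a: "arg_type \<Gamma> a B" and t: "typed \<Theta> \<Gamma> P' S0" by blast
  from tEq.hyps(2) show ?case
  proof (cases rule: teq.cases)
    case teq_end
    then show ?thesis using h hnf_det by fastforce
  next
    case (teq_sel bs cs')
    then have "bs = cs" using h hnf_det by blast
    with teq_sel m obtain T' where "(l, B, T') \<in> set cs'" "teq S0 T'" by fastforce
    then show ?thesis using teq_sel a t by (blast intro: typed.tEq)
  next
    case (teq_bra bs cs')
    then show ?thesis using h hnf_det by fastforce
  qed
qed simp_all

lemma inv_bra:
  "typed \<Theta> \<Gamma> P T \<Longrightarrow> P = PBra bs \<Longrightarrow>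
   \<exists>cs. hnf T (SBra cs) \<and> (\<forall>(l, B, S) \<in> set cs. \<exists>x Q. map_of bs l = Some (x, Q) \<and> typed \<Theta> (\<Gamma>(x \<mapsto> B)) Q S)"
proof (induction rule: typed.induct)
  case (tBra tbs bs' \<Theta> \<Gamma>)
  from tBra.prems have e: "bs' = bs" by simp
  have "\<forall>(l, B, S) \<in> set tbs. \<exists>x Q. map_of bs l = Some (x, Q) \<and> typed \<Theta> (\<Gamma>(x \<mapsto> B)) Q S"
  proof clarify
    fix l B S assume "(l, B, S) \<in> set tbs"
    with tBra(1) obtain x Q where "map_of bs' l = Some (x, Q)" "typed \<Theta> (\<Gamma>(x \<mapsto> B)) Q S" by blast
    then show "\<exists>x Q. map_of bs l = Some (x, Q) \<and> typed \<Theta> (\<Gamma>(x \<mapsto> B)) Q S" using e by blast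
  qed
  then show ?case using hnf.hnf_bra by blast
next
  case (tEq \<Theta> \<Gamma> P S S')
  then obtain cs where h: "hnf S (SBra cs)" and m: "\<forall>(l, B, S) \<in> set cs. \<exists>x Q. map_of bs l = Some (x, Q) \<and> typed \<Theta> (\<Gamma>(x \<mapsto> B)) Q S"
    by blast
  from tEq.hyps(2) show ?case
  proof (cases rule: teq.cases)
    case teq_end
    then show ?thesis using h hnf_det by fastforce
  next
    case (teq_sel bs cs')
    then show ?thesis using h hnf_det by fastforce
  next
    case (teq_bra bs0 cs')
    then have "bs0 = cs" using h hnf_det by blast
    have "\<forall>(l, B, T') \<in> set cs'. \<exists>x Q. map_of bs l = Some (x, Q) \<and> typed \<Theta> (\<Gamma>(x \<mapsto> B)) Q T'"
    proof clarify
      fix l B T' assume "(l, B, T') \<in> set cs'"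
      with teq_bra(4) \<open>bs0 = cs\<close> obtain S0 where "(l, B, S0) \<in> set cs" "teq S0 T'" by fastforce
      with m obtain x Q where "map_of bs l = Some (x, Q)" "typed \<Theta> (\<Gamma>(x \<mapsto> B)) Q S0" by blast
      then show "\<exists>x Q. map_of bs l = Some (x, Q) \<and> typed \<Theta> (\<Gamma>(x \<mapsto> B)) Q T'"
        using \<open>teq S0 T'\<close> typed.tEq by blast
    qed
    then show ?thesis using teq_bra by blast
  qed
qed simp_all

lemma subj_red:
  "typed \<Theta> \<Gamma> P T \<Longrightarrow> \<Theta> = Map.empty \<Longrightarrow> \<Gamma> = Map.empty \<Longrightarrow> pstep P ATau P' \<Longrightarrow> typed \<Theta> \<Gamma> P' T"
proof (induction rule: typed.induct)
  case (tRec \<Theta> X S \<Gamma> P)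
  from tRec.prems(3) have "P' = psubstX P X (PRec X P)" by (cases rule: pstep.cases) auto
  moreover have "typed Map.empty Map.empty (PRec X P) S" using tRec typed.tRec by blast
  ultimately show ?case using tRec typed_psubstX[of "\<Theta>(X \<mapsto> S)" \<Gamma> P S X S "PRec X P" \<Theta>] by auto
next
  case (tIf \<Gamma> A \<Theta> P S Q)
  from tIf.prems(3) have "P' = P \<or> P' = Q" by (cases rule: pstep.cases) auto
  then show ?case using tIf by auto
next
  case (tEq \<Theta> \<Gamma> P S S')
  then show ?case by (auto intro: typed.tEq)
qed (simp_all add: pstep.simps)


lemma map_of_map2': "map_of (map (\<lambda>(l, B, S). (l, g l B S)) bs) k = map_option (\<lambda>(B, S). g k B S) (map_of bs k)"
  by (induct bs) auto

lemma synth_step: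
  "mstep (synth S) \<alpha> M' \<Longrightarrow>
    (\<exists>tbs l v. S = SSel tbs \<and> \<alpha> = ARcvP l v) \<or> (\<exists>tbs l v. S = SBra tbs \<and> \<alpha> = ARcvE l v)
  \<or> (\<exists>X S0. S = SRec X S0 \<and> \<alpha> = ATau \<and> M' = synth (ssubst S0 X (SRec X S0)))"
proof (cases S)
  case (SRec X S0)
  assume "mstep (synth S) \<alpha> M'"
  then have "\<alpha> = ATau \<and> M' = msubstX (synth S0) X (MRec X (synth S0))"
    using SRec by (auto elim: mstep.cases)
  then show ?thesis using SRec synth_ssubst[of S0 X "SRec X S0"] by auto
qed (auto elim: mstep.cases)

definition inv :: "proc \<Rightarrow> mon \<Rightarrow> bool" where
  "inv P M \<longleftrightarrow>
   (\<exists>S T0. M = synth S \<and> typed Map.empty Map.empty P T0 \<and> (\<forall>H. hnf T0 H \<longrightarrow> hnf S H) \<and> dl S)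
 \<or> (\<exists>B v l S. M = MIf (PIsVal B (AVal v)) (MSendE l (AVal v) (synth S)) NoP \<and> has_type v B
       \<and> typed Map.empty Map.empty P S \<and> dl S)
 \<or> (\<exists>l v S. M = MSendE l (AVal v) (synth S) \<and> typed Map.empty Map.empty P S \<and> dl S)
 \<or> (\<exists>B v l S T0 tbs. M = MIf (PIsVal B (AVal v)) (MSendP l (AVal v) (synth S)) NoE
       \<and> typed Map.empty Map.empty P T0 \<and> (\<forall>H. hnf T0 H \<longrightarrow> hnf (SBra tbs) H) \<and> (l, B, S) \<in> set tbs \<and> dl S)
 \<or> (\<exists>B v l S T0 tbs. M = MSendP l (AVal v) (synth S) \<and> has_type v B
       \<and> typed Map.empty Map.empty P T0 \<and> (\<forall>H. hnf T0 H \<longrightarrow> hnf (SBra tbs) H) \<and> (l, B, S) \<in> set tbs \<and> dl S)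
 \<or> M = NoE"

lemma invA: "typed Map.empty Map.empty P T0 \<Longrightarrow> \<forall>H. hnf T0 H \<longrightarrow> hnf S H \<Longrightarrow> dl S \<Longrightarrow> inv P (synth S)"
  unfolding inv_def by (intro disjI1 exI conjI) auto

lemma invB: "has_type v B \<Longrightarrow> typed Map.empty Map.empty P S \<Longrightarrow> dl S \<Longrightarrow>
  inv P (MIf (PIsVal B (AVal v)) (MSendE l (AVal v) (synth S)) NoP)"
  unfolding inv_def by (intro disjI2 disjI1 exI conjI) auto

lemma invC: "typed Map.empty Map.empty P S \<Longrightarrow> dl S \<Longrightarrow> inv P (MSendE l (AVal v) (synth S))"
  unfolding inv_def by (intro disjI2 disjI1 exI conjI) auto

lemma invD: "typed Map.empty Map.empty P T0 \<Longrightarrow> \<forall>H. hnf T0 H \<longrightarrow> hnf (SBra tbs) H \<Longrightarrow> (l, B, S) \<in> set tbs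
  \<Longrightarrow> dl S \<Longrightarrow> inv P (MIf (PIsVal B (AVal v)) (MSendP l (AVal v) (synth S)) NoE)"
  unfolding inv_def by (intro disjI2 disjI1 exI conjI) auto

lemma invE: "has_type v B \<Longrightarrow> typed Map.empty Map.empty P T0 \<Longrightarrow> \<forall>H. hnf T0 H \<longrightarrow> hnf (SBra tbs) H \<Longrightarrow> (l, B, S) \<in> set tbs
  \<Longrightarrow> dl S \<Longrightarrow> inv P (MSendP l (AVal v) (synth S))"
  unfolding inv_def by (intro disjI2 disjI1 exI conjI) auto

lemma invNoE: "inv P NoE"
  unfolding inv_def by simp

lemma tau_typed: "pstep P ATau P' \<Longrightarrow> typed Map.empty Map.empty P T \<Longrightarrow> typed Map.empty Map.empty P' T"
  using subj_red by blast

lemma formA: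
  assumes st: "sstep P (synth S) \<alpha> P' M'" and ty: "typed Map.empty Map.empty P T0"
    and hh: "\<forall>H. hnf T0 H \<longrightarrow> hnf S H" and d: "dl S"
  shows "inv P' M'"
  using st
proof (cases rule: sstep.cases)
  case (s_out l v)
  from s_out(2) have P: "P = PSend l (AVal v) P'" by (cases rule: pstep.cases) auto
  from inv_send[OF ty P] obtain cs B S1 where h: "hnf T0 (SSel cs)" and m: "(l, B, S1) \<in> set cs"
    and hv: "has_type v B" and t1: "typed Map.empty Map.empty P' S1" by auto
  from synth_step[OF s_out(3)] obtain tbs where S: "S = SSel tbs" by auto
  from hh h S have "hnf (SSel tbs) (SSel cs)" by auto
  then have "cs = tbs" by (auto elim: hnf_SSelE)
  with m d S have mo: "map_of tbs l = Some (B, S1)" and d1: "dl S1" by auto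
  from s_out(3) S mo have "M' = msubstv (MIf (PIsVal B (AVar ''x'')) (MSendE l (AVar ''x'') (synth S1)) NoP) ''x'' v"
    by (auto elim!: mstep.cases simp: map_of_map2')
  then have "M' = MIf (PIsVal B (AVal v)) (MSendE l (AVal v) (synth S1)) NoP"
    by (simp add: msubstv_synth)
  then show ?thesis using invB hv t1 d1 by simp
next
  case (s_in l v)
  then show ?thesis using synth_step[OF s_in(3)] by auto
next
  case (s_envS l v)
  then show ?thesis using synth_step[OF s_envS(3)] by auto
next
  case (s_envR l v)
  from synth_step[OF s_envR(3)] obtain tbs where S: "S = SBra tbs" using s_envR by auto
  show ?thesis
  proof (cases "map_of tbs l")
    case None
    then have "M' = NoE" using s_envR S by (auto elim!: mstep.cases simp: map_of_map2')
    then show ?thesis using invNoE by simp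
  next
    case (Some p)
    then obtain B S1 where mo: "map_of tbs l = Some (B, S1)" by (cases p) auto
    then have mem: "(l, B, S1) \<in> set tbs" by (rule map_of_SomeD)
    with d S have d1: "dl S1" by auto
    from s_envR S mo have "M' = msubstv (MIf (PIsVal B (AVar ''x'')) (MSendP l (AVar ''x'') (synth S1)) NoE) ''x'' v"
      by (auto elim!: mstep.cases simp: map_of_map2')
    then have "M' = MIf (PIsVal B (AVal v)) (MSendP l (AVal v) (synth S1)) NoE"
      by (simp add: msubstv_synth)
    then show ?thesis using invD s_envR ty hh S mem d1 by simp
  qed
next
  case s_tauP
  then have "typed Map.empty Map.empty P' T0" using ty tau_typed by blast
  then show ?thesis using s_tauP hh d invA by simp
next
  case s_tauM
  from synth_step[OF s_tauM(3)] obtain X S0 where S: "S = SRec X S0" and M': "M' = synth (ssubst S0 X (SRec X S0))"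
    by auto
  have "\<forall>H. hnf T0 H \<longrightarrow> hnf (ssubst S0 X (SRec X S0)) H" using hh S by (auto elim: hnf_SRecE)
  moreover have "dl (ssubst S0 X (SRec X S0))" using d S dl_ssubst by auto
  ultimately show ?thesis using invA s_tauM M' ty by simp
qed


lemma invA': "typed Map.empty Map.empty P S \<Longrightarrow> dl S \<Longrightarrow> inv P (synth S)"
  using invA by blast

lemma formB:
  assumes st: "sstep P (MIf (PIsVal B (AVal v)) (MSendE l (AVal v) (synth S)) NoP) \<alpha> P' M'"
    and hv: "has_type v B" and ty: "typed Map.empty Map.empty P S" and d: "dl S"
  shows "inv P' M'"
  using st
proof (cases rule: sstep.cases)
  case s_tauP
  then show ?thesis using invB[OF hv tau_typed[OF _ ty] d] by simp
next
  case s_tauM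
  from s_tauM(3) hv have "M' = MSendE l (AVal v) (synth S)" by (auto elim: mstep.cases)
  then show ?thesis using invC ty d s_tauM by simp
qed (auto elim: mstep.cases)

lemma formC:
  assumes st: "sstep P (MSendE l (AVal v) (synth S)) \<alpha> P' M'"
    and ty: "typed Map.empty Map.empty P S" and d: "dl S"
  shows "inv P' M'"
  using st
proof (cases rule: sstep.cases)
  case s_tauP
  then show ?thesis using invC[OF tau_typed[OF _ ty] d] by simp
next
  case (s_envS l' v')
  then have "M' = synth S" by (auto elim: mstep.cases)
  then show ?thesis using invA' ty d s_envS by simp
qed (auto elim: mstep.cases)

lemma formD:
  assumes st: "sstep P (MIf (PIsVal B (AVal v)) (MSendP l (AVal v) (synth S)) NoE) \<alpha> P' M'"
    and ty: "typed Map.empty Map.empty P T0" and hh: "\<forall>H. hnf T0 H \<longrightarrow> hnf (SBra tbs) H"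
    and m: "(l, B, S) \<in> set tbs" and d: "dl S"
  shows "inv P' M'"
  using st
proof (cases rule: sstep.cases)
  case s_tauP
  then show ?thesis using invD[OF tau_typed[OF _ ty] hh m d] by simp
next
  case s_tauM
  from s_tauM(3) have "(M' = MSendP l (AVal v) (synth S) \<and> has_type v B) \<or> M' = NoE"
    by (auto elim: mstep.cases)
  then show ?thesis using invE[OF _ ty hh m d] invNoE s_tauM by auto
qed (auto elim: mstep.cases)

lemma formE:
  assumes st: "sstep P (MSendP l (AVal v) (synth S)) \<alpha> P' M'"
    and hv: "has_type v B"
    and ty: "typed Map.empty Map.empty P T0" and hh: "\<forall>H. hnf T0 H \<longrightarrow> hnf (SBra tbs) H"
    and m: "(l, B, S) \<in> set tbs" and d: "dl S"
  shows "inv P' M'"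
  using st
proof (cases rule: sstep.cases)
  case s_tauP
  then show ?thesis using invE[OF hv tau_typed[OF _ ty] hh m d] by simp
next
  case (s_in l' v')
  from s_in(3) have e: "l' = l" "v' = v" "M' = synth S" by (auto elim: mstep.cases)
  from s_in(2) e obtain bs x Q where P: "P = PBra bs" and mo: "map_of bs l = Some (x, Q)"
    and P': "P' = psubstv Q x v" by (auto elim: pstep.cases)
  from inv_bra[OF ty P] obtain cs where h: "hnf T0 (SBra cs)"
    and all: "\<forall>(l, B, S) \<in> set cs. \<exists>x Q. map_of bs l = Some (x, Q) \<and> typed Map.empty (Map.empty(x \<mapsto> B)) Q S"
    by blast
  from hh h have "hnf (SBra tbs) (SBra cs)" by auto
  then have "cs = tbs" by (auto elim: hnf_SBraE)
  with all m mo have tq: "typed Map.empty (Map.empty(x \<mapsto> B)) Q S" by fastforce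
  have "typed Map.empty Map.empty (psubstv Q x v) S"
    by (rule typed_psubstv[OF tq]) (use hv in auto)
  then show ?thesis using invA' d P' e by simp
qed (auto elim: mstep.cases)

lemma formNoE:
  assumes st: "sstep P NoE \<alpha> P' M'"
  shows "inv P' M'"
  using st
proof (cases rule: sstep.cases)
  case s_tauP
  then show ?thesis using invNoE by simp
qed (auto elim: mstep.cases)

lemma inv_step: "inv P M \<Longrightarrow> sstep P M \<alpha> P' M' \<Longrightarrow> inv P' M'"
  unfolding inv_def[of P M]
  by (elim disjE exE conjE; simp only:)
     (erule formA formB formC formD formE formNoE; assumption)+

lemma inv_wsteps: "wsteps P M t P' M' \<Longrightarrow> inv P M \<Longrightarrow> inv P' M'"
  by (induction rule: wsteps.induct) (auto intro: inv_step)

lemma inv_not_NoP: "\<not> inv P NoP"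
proof
  assume "inv P NoP"
  then show False unfolding inv_def
  proof (elim disjE exE conjE)
    fix S T0 assume "NoP = synth S"
    then show False by (cases S) auto
  qed auto
qed

theorem mainTheorem1:
  fixes S :: stype and P :: proc
  assumes "wf_stype S"
    and "\<exists>t P'. wsteps P (synth S) t P' NoP"
  shows "\<not> typed Map.empty Map.empty P S"
proof
  assume ty: "typed Map.empty Map.empty P S"
  from assms(2) obtain t P' where w: "wsteps P (synth S) t P' NoP" by blast
  have "inv P (synth S)" using invA' ty wf_dl[OF assms(1)] by blast
  with w have "inv P' NoP" by (rule inv_wsteps)
  with inv_not_NoP show False by blast
qed

end
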